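(* Consider Method 2.3 (a modified level method, described in the context) and suppose it does not terminate and the numbers $\varepsilon_k$ satisfy $\varepsilon_k>0$ for all $k\in K$ and $\varepsilon_k\to0$. Then the sequences $\{z_k\},\{\sigma_k\}$ are defined for all $k\in K$ and $\lim_{k\to\infty}f(z_k)=f^*$, $\lim_{k\to\infty}\sigma_k=f^*$.
   Context: Setting: $D\subset\mathbb{R}^n$ convex, closed and bounded (nonempty); $f$ convex on $\mathbb{R}^n$; $f^*=\min_Df$; $X^*=\{x\in D:f(x)=f^*\}$, $x^*\in X^*$ fixed; $K=\{0,1,\dots\}$; $\operatorname{epi}(f,D)=\{(x,\gamma):x\in D,\gamma\ge f(x)\}$; $\partial f(x)$ is the subdifferential. Method 2.3: choose closed convex $M_0\subset\mathbb{R}^{n+1}$ with $\operatorname{epi}(f,D)\subset M_0$, numbers $\varepsilon_0\ge0$, $\alpha_0\le f^*\le\beta_{-1}$, and $\bar\lambda\in(0,1)$; set $\delta_0=+\infty$, $i=k=0$. Step 1: let $(y_i,\gamma_i)$ solve $\min\{\gamma:(x,\gamma)\in M_i,\ x\in D,\ \gamma\ge\alpha_i\}$; if $f(y_i)=\gamma_i$ stop. Step 2: choose $\lambda_i\in(0,\bar\lambda]$; set $\beta_i=\min\{\beta_{i-1},\delta_i\}$, $l_i=(1-\lambda_i)\gamma_i+\lambda_i\beta_i$, and $U_i=\{x\in D:\exists\gamma\le l_i \text{ with }(x,\gamma)\in M_i\}$. Step 3: choose $x_i\in U_i$. Step 4: if $f(x_i)-\gamma_i>\varepsilon_k$ set $Q_i=M_i$;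 otherwise set $i_k=i$, $z_k=x_{i_k}$, $\sigma_k=\gamma_{i_k}$, choose closed convex $Q_i\subset\mathbb{R}^{n+1}$ with $(x^*,f^* )\in Q_i$, choose $\varepsilon_{k+1}\ge0$, $k\leftarrow k+1$. Step 5: $M_{i+1}=Q_i\cap\{(x,\gamma):f(x_i)+\langle a_i,x-x_i\rangle\le\gamma\}$ with $a_i\in\partial f(x_i)$. Step 6: $\alpha_{i+1}=\gamma_i$, $\delta_{i+1}=f(x_i)$; $i\leftarrow i+1$; go to Step 1. *)

theory Defs
  imports "HOL-Analysis.Analysis"
begin

definition subdifferential :: "('a::real_inner \<Rightarrow> real) \<Rightarrow> 'a \<Rightarrow> 'a set" where
  "subdifferential f x = {a. \<forall>y. f x + inner a (y - x) \<le> f y}"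

definition epi_on :: "('a \<Rightarrow> real) \<Rightarrow> 'a set \<Rightarrow> ('a \<times> real) set" where
  "epi_on f D = {(x, g). x \<in> D \<and> f x \<le> g}"

end

theory Submission
  imports Defs
begin

lemma subgrad_bound:
  fixes f :: "'a::euclidean_space \<Rightarrow> real" and D :: "'a set"
  assumes "convex_on UNIV f" "bounded D"
  obtains L where "L > 0" "\<forall>x\<in>D. \<forall>a\<in>subdifferential f x. norm a \<le> L"
proof -
  obtain R where R: "\<forall>x\<in>D. norm x \<le> R" using assms(2) unfolding bounded_iff by blast
  have cont: "continuous_on UNIV f" using convex_on_continuous[OF open_UNIV assms(1)] .
  have "compact (f ` cball 0 (R+1))"
    by (rule compact_continuous_image) (auto intro: continuous_on_subset[OF cont])
  from compact_imp_bounded[OF this] obtain B where "\<forall>v\<in>f ` cball 0 (R+1). norm v \<le> B"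
    unfolding bounded_iff by blast
  then have B: "\<And>y. y \<in> cball 0 (R+1) \<Longrightarrow> \<bar>f y\<bar> \<le> B" by simp
  have xin: "x \<in> cball 0 (R+1)" if "x \<in> D" for x
  proof -
    have "norm x \<le> R" using R that by blast
    then show ?thesis by simp
  qed
  have "\<forall>x\<in>D. \<forall>a\<in>subdifferential f x. norm a \<le> 2*\<bar>B\<bar> + 1"
  proof (intro ballI)
    fix x a assume x: "x \<in> D" and a: "a \<in> subdifferential f x"
    have fx: "\<bar>f x\<bar> \<le> B" using B xin x by blast
    show "norm a \<le> 2*\<bar>B\<bar> + 1"
    proof (cases "a = 0")
      case True
      then show ?thesis by simp
    next
      case False
      define y where "y = x + (1 / norm a) *\<^sub>R a"
      have n1: "norm ((1 / norm a) *\<^sub>R a) = 1" using False by simp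
      have "norm y \<le> norm x + norm ((1 / norm a) *\<^sub>R a)" unfolding y_def by (rule norm_triangle_ineq)
      also have "norm x \<le> R" using R x by blast
      finally have "norm y \<le> R + 1" using n1 by linarith
      hence "y \<in> cball 0 (R+1)" by simp
      hence fy: "\<bar>f y\<bar> \<le> B" using B by blast
      have sg: "f x + inner a (y - x) \<le> f y" using a unfolding subdifferential_def by blast
      have "y - x = (1 / norm a) *\<^sub>R a" unfolding y_def by simp
      hence "inner a (y - x) = (1 / norm a) * inner a a" by simp
      also have "inner a a = norm a * norm a" by (metis power2_eq_square power2_norm_eq_inner)
      finally have "inner a (y - x) = norm a" using False by simp
      then show ?thesis using fy fx sg by linarith
    qed
  qed
  moreover have "2*\<bar>B\<bar>+1 > 0" by simp
  ultimately show ?thesis using that by blast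
qed

lemma separated_false:
  fixes x :: "nat \<Rightarrow> 'a::euclidean_space"
  assumes "compact D" "\<forall>i. x i \<in> D" "c > 0"
    and sep: "\<forall>i j. N \<le> i \<longrightarrow> i < j \<longrightarrow> c \<le> dist (x i) (x j)"
  shows False
proof -
  obtain l r where r: "strict_mono (r :: nat \<Rightarrow> nat)" "(x \<circ> r) \<longlonglongrightarrow> l"
    using seq_compactE[OF compact_imp_seq_compact[OF assms(1)] assms(2)] by blast
  have "Cauchy (x \<circ> r)" using r(2) by (rule LIMSEQ_imp_Cauchy)
  then obtain M where M: "\<forall>m\<ge>M. \<forall>n\<ge>M. dist ((x \<circ> r) m) ((x \<circ> r) n) < c"
    using metric_CauchyD[OF _ assms(3)] by blast
  define m where "m = max M N"
  have "r m < r (Suc m)" using r(1) by (simp add: strict_mono_def)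
  moreover have "N \<le> r m" using seq_suble[OF r(1), of m] m_def by simp
  ultimately have "c \<le> dist (x (r m)) (x (r (Suc m)))" using sep by blast
  moreover have "dist (x (r m)) (x (r (Suc m))) < c" using M m_def by auto
  ultimately show False by simp
qed

theorem theorem2p3p3:
  fixes D :: "'a::euclidean_space set" and f :: "'a \<Rightarrow> real" and xs :: 'a
    and M Q :: "nat \<Rightarrow> ('a \<times> real) set"
    and y x a :: "nat \<Rightarrow> 'a"
    and \<gamma> \<alpha> \<beta> lam l \<epsilon> :: "nat \<Rightarrow> real"
    and \<beta>m1 lbar :: real
    and kc :: "nat \<Rightarrow> nat"
    and ik :: "nat \<Rightarrow> nat" and z :: "nat \<Rightarrow> 'a" and \<sigma> :: "nat \<Rightarrow> real"
  assumes D: "convex D" "closed D" "bounded D" "D \<noteq> {}"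
    and f_convex: "convex_on UNIV f"
    and xs_opt: "xs \<in> D" "\<forall>u\<in>D. f xs \<le> f u"
    \<comment> \<open>initialisation\<close>
    and M0: "closed (M 0)" "convex (M 0)" "epi_on f D \<subseteq> M 0"
    and eps: "\<forall>k. \<epsilon> k > 0" "\<epsilon> \<longlonglongrightarrow> 0"
    and alpha0: "\<alpha> 0 \<le> f xs" and betam1: "f xs \<le> \<beta>m1"
    and lambar: "0 < lbar" "lbar < 1"
    and kc0: "kc 0 = 0"
    \<comment> \<open>Step 1: (y i, \<gamma> i) solves the auxiliary problem; the method does not stop\<close>
    and step1: "\<forall>i. (y i, \<gamma> i) \<in> M i \<and> y i \<in> D \<and> \<alpha> i \<le> \<gamma> i \<and>
                   (\<forall>u g. (u, g) \<in> M i \<and> u \<in> D \<and> \<alpha> i \<le> g \<longrightarrow> \<gamma> i \<le> g)"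
    and no_stop: "\<forall>i. f (y i) \<noteq> \<gamma> i"
    \<comment> \<open>Step 2 (with \<delta>_0 = +\<infinity>, \<delta>_(i+1) = f(x_i))\<close>
    and lam: "\<forall>i. 0 < lam i \<and> lam i \<le> lbar"
    and beta0: "\<beta> 0 = \<beta>m1"
    and betaS: "\<forall>i. \<beta> (Suc i) = min (\<beta> i) (f (x i))"
    and level: "\<forall>i. l i = (1 - lam i) * \<gamma> i + lam i * \<beta> i"
    \<comment> \<open>Step 3: x i \<in> U i\<close>
    and step3: "\<forall>i. x i \<in> D \<and> (\<exists>g. g \<le> l i \<and> (x i, g) \<in> M i)"
    \<comment> \<open>Step 4\<close>
    and step4_null: "\<forall>i. f (x i) - \<gamma> i > \<epsilon> (kc i) \<longrightarrow> Q i = M i \<and> kc (Suc i) = kc i"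
    and step4_serious: "\<forall>i. \<not> (f (x i) - \<gamma> i > \<epsilon> (kc i)) \<longrightarrow>
           ik (kc i) = i \<and> z (kc i) = x i \<and> \<sigma> (kc i) = \<gamma> i \<and>
           closed (Q i) \<and> convex (Q i) \<and> (xs, f xs) \<in> Q i \<and> kc (Suc i) = Suc (kc i)"
    \<comment> \<open>Step 5\<close>
    and subgrad: "\<forall>i. a i \<in> subdifferential f (x i)"
    and step5: "\<forall>i. M (Suc i) = Q i \<inter> {(u, g). f (x i) + inner (a i) (u - x i) \<le> g}"
    \<comment> \<open>Step 6\<close>
    and step6: "\<forall>i. \<alpha> (Suc i) = \<gamma> i"
  shows "(\<forall>k. \<exists>i. kc i = k \<and> \<not> (f (x i) - \<gamma> i > \<epsilon> k))
         \<and> (\<lambda>k. f (z k)) \<longlonglongrightarrow> f xs \<and> \<sigma> \<longlonglongrightarrow> f xs"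
proof -
  have subI: "f (x i) + inner (a i) (u - x i) \<le> f u" for i u
    using subgrad unfolding subdifferential_def by blast
  have inv: "(xs, f xs) \<in> M i \<and> \<alpha> i \<le> f xs" for i
  proof (induction i)
    case 0
    then show ?case using M0(3) xs_opt(1) alpha0 unfolding epi_on_def by auto
  next
    case (Suc i)
    have s1: "\<forall>u g. (u, g) \<in> M i \<and> u \<in> D \<and> \<alpha> i \<le> g \<longrightarrow> \<gamma> i \<le> g" using step1 by blast
    have g: "\<gamma> i \<le> f xs" using s1 Suc xs_opt(1) by blast
    have q: "(xs, f xs) \<in> Q i"
    proof (cases "f (x i) - \<gamma> i > \<epsilon> (kc i)")
      case True then show ?thesis using step4_null Suc by auto
    next
      case False then show ?thesis using step4_serious by auto
    qed
    have "(xs, f xs) \<in> M (Suc i)" using q subI[of i xs] step5 by auto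
    then show ?case using g step6 by auto
  qed
  have gle: "\<gamma> i \<le> f xs" for i
  proof -
    have s1: "\<forall>u g. (u, g) \<in> M i \<and> u \<in> D \<and> \<alpha> i \<le> g \<longrightarrow> \<gamma> i \<le> g" using step1 by blast
    then show ?thesis using inv[of i] xs_opt(1) by blast
  qed
  have gmono: "\<gamma> i \<le> \<gamma> (Suc i)" for i
  proof -
    have "\<alpha> (Suc i) \<le> \<gamma> (Suc i)" using step1 by blast
    then show ?thesis using step6 by simp
  qed
  have binc: "\<beta> (Suc n) \<le> \<beta> n" for n using betaS by simp
  have bx: "\<beta> j \<le> f (x i)" if "i < j" for i j
  proof -
    have "\<beta> j \<le> \<beta> (Suc i)" using lift_Suc_antimono_le[of \<beta>, OF binc] that by simp
    also have "\<beta> (Suc i) \<le> f (x i)" using betaS by simp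
    finally show ?thesis .
  qed
  obtain L where L: "L > 0" "\<forall>u\<in>D. \<forall>b\<in>subdifferential f u. norm b \<le> L"
    using subgrad_bound[OF f_convex D(3)] by blast
  have compD: "compact D" using D compact_eq_bounded_closed by blast
  have xD: "\<forall>i. x i \<in> D" using step3 by blast
  have gconv: "convergent \<gamma>"
  proof -
    have "\<gamma> \<longlonglongrightarrow> (SUP i. \<gamma> i)"
      by (rule LIMSEQ_incseq_SUP) (auto intro!: incseq_SucI gmono bdd_aboveI2 gle)
    then show ?thesis by (auto simp: convergent_def)
  qed
  have A: "\<exists>i\<ge>N. \<not> (f (x i) - \<gamma> i > \<epsilon> (kc i))" for N
  proof (rule ccontr)
    assume "\<not> ?thesis"
    hence nul: "\<And>i. N \<le> i \<Longrightarrow> f (x i) - \<gamma> i > \<epsilon> (kc i)" by auto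
    have nulS: "Q i = M i \<and> kc (Suc i) = kc i" if "N \<le> i" for i
      using step4_null nul[OF that] by blast
    have kcN: "kc i = kc N" if "N \<le> i" for i
      using that
    proof (induction rule: dec_induct)
      case base then show ?case by simp
    next
      case (step n) then show ?case using nulS[of n] by simp
    qed
    define e where "e = \<epsilon> (kc N)"
    have e: "e > 0" using eps(1) e_def by simp
    have nulE: "f (x i) - \<gamma> i > e" if "N \<le> i" for i
      using nul[OF that] kcN[OF that] e_def by simp
    have Msuc: "M (Suc m) \<subseteq> M m" if "N \<le> m" for m
    proof -
      have "M (Suc m) = Q m \<inter> {(u, g). f (x m) + inner (a m) (u - x m) \<le> g}" using step5 by blast
      then show ?thesis using nulS[OF that] by blast
    qed
    have Mdec: "M j \<subseteq> M n" if "N \<le> n" "n \<le> j" for n j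
    proof -
      have "\<And>m. m \<in> {N..} \<Longrightarrow> M (Suc m) \<le> M m" using Msuc by simp
      moreover have "{n..<j} \<subseteq> {N..}" using that by auto
      ultimately show ?thesis using lift_Suc_antimono_le_ivl[of "{N..}" M n j] that(2) by blast
    qed
    have "Cauchy \<gamma>" using gconv convergent_Cauchy by blast
    moreover have "e/2 > 0" using e by simp
    ultimately obtain N1 where N1: "\<forall>m\<ge>N1. \<forall>n\<ge>N1. dist (\<gamma> m) (\<gamma> n) < e/2"
      using metric_CauchyD by blast
    define c where "c = (1 - lbar) * (e/2) / L"
    have c: "c > 0" using lambar e L unfolding c_def by simp
    have sep: "\<forall>i j. max N N1 \<le> i \<longrightarrow> i < j \<longrightarrow> c \<le> dist (x i) (x j)"
    proof (intro allI impI)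
      fix i j assume ij: "max N N1 \<le> i" "i < j"
      have iN: "N \<le> i" "N1 \<le> i" "N1 \<le> j" using ij by auto
      obtain g where g: "g \<le> l j" "(x j, g) \<in> M j" using step3 by blast
      have "M j \<subseteq> M (Suc i)" using Mdec[of "Suc i" j] iN ij(2) by simp
      hence "(x j, g) \<in> M (Suc i)" using g by blast
      moreover have "M (Suc i) = Q i \<inter> {(u, g). f (x i) + inner (a i) (u - x i) \<le> g}" using step5 by blast
      ultimately have cut: "f (x i) + inner (a i) (x j - x i) \<le> g" by blast
      have ai: "norm (a i) \<le> L" using L(2) xD subgrad by blast
      have "\<bar>inner (a i) (x j - x i)\<bar> \<le> norm (a i) * norm (x j - x i)" by (rule Cauchy_Schwarz_ineq2)
      also have "\<dots> \<le> L * norm (x j - x i)"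
        using ai by (rule mult_right_mono) simp
      finally have ip0: "\<bar>inner (a i) (x j - x i)\<bar> \<le> L * dist (x i) (x j)"
        by (simp add: dist_norm norm_minus_commute)
      hence ip: "- inner (a i) (x j - x i) \<le> L * dist (x i) (x j)" by linarith
      have lamj: "0 < lam j" "lam j \<le> lbar" using lam by auto
      have lv: "l j = (1 - lam j) * \<gamma> j + lam j * \<beta> j" using level by blast
      have "lam j * \<beta> j \<le> lam j * f (x i)" using bx[OF ij(2)] lamj by (simp add: mult_left_mono)
      hence lj: "l j \<le> (1 - lam j) * \<gamma> j + lam j * f (x i)" using lv by linarith
      have "dist (\<gamma> j) (\<gamma> i) < e/2" using N1 iN by blast
      hence gd: "\<gamma> j - \<gamma> i < e/2" unfolding dist_real_def by linarith
      have fe: "f (x i) - \<gamma> j > e/2" using nulE[OF iN(1)] gd by linarith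
      have "(1 - lbar) * (e/2) \<le> (1 - lam j) * (f (x i) - \<gamma> j)"
        using lamj lambar e fe by (intro mult_mono) auto
      also have "\<dots> = f (x i) - ((1 - lam j) * \<gamma> j + lam j * f (x i))" by (simp add: algebra_simps)
      also have "\<dots> \<le> f (x i) - l j" using lj by linarith
      also have "\<dots> \<le> L * dist (x i) (x j)" using cut g(1) ip by linarith
      finally have "(1 - lbar) * (e/2) \<le> L * dist (x i) (x j)" .
      then show "c \<le> dist (x i) (x j)" using L(1) unfolding c_def
        by (simp add: divide_le_eq mult.commute)
    qed
    show False using separated_false[OF compD xD c sep] .
  qed
  have serS: "ik (kc i) = i \<and> z (kc i) = x i \<and> \<sigma> (kc i) = \<gamma> i \<and> kc (Suc i) = Suc (kc i)"
    if "\<not> (f (x i) - \<gamma> i > \<epsilon> (kc i))" for i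
  proof -
    have h: "\<not> (f (x i) - \<gamma> i > \<epsilon> (kc i)) \<longrightarrow>
           ik (kc i) = i \<and> z (kc i) = x i \<and> \<sigma> (kc i) = \<gamma> i \<and>
           closed (Q i) \<and> convex (Q i) \<and> (xs, f xs) \<in> Q i \<and> kc (Suc i) = Suc (kc i)"
      using step4_serious by (rule spec)
    show ?thesis using mp[OF h that] by blast
  qed
  have nulS: "kc (Suc i) = kc i" if "f (x i) - \<gamma> i > \<epsilon> (kc i)" for i
  proof -
    have h: "f (x i) - \<gamma> i > \<epsilon> (kc i) \<longrightarrow> Q i = M i \<and> kc (Suc i) = kc i"
      using step4_null by (rule spec)
    show ?thesis using mp[OF h that] by blast
  qed
  have firstser: "\<exists>j\<ge>i. kc j = kc i \<and> \<not> (f (x j) - \<gamma> j > \<epsilon> (kc j))" for i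
  proof -
    define P where "P = (\<lambda>j. i \<le> j \<and> \<not> (f (x j) - \<gamma> j > \<epsilon> (kc j)))"
    define j where "j = (LEAST j. P j)"
    have ex: "\<exists>j. P j" using A[of i] unfolding P_def by blast
    have j: "P j" using LeastI_ex[OF ex] unfolding j_def .
    have before: "f (x m) - \<gamma> m > \<epsilon> (kc m)" if "i \<le> m" "m < j" for m
    proof -
      have "\<not> P m" using not_less_Least[of m P] that(2) unfolding j_def by blast
      then show ?thesis using that(1) unfolding P_def by blast
    qed
    have kcm: "m \<le> j \<longrightarrow> kc m = kc i" if "i \<le> m" for m
      using that
    proof (induction m rule: dec_induct)
      case base then show ?case by simp
    next
      case (step n)
      show ?case
      proof
        assume "Suc n \<le> j"
        hence nj: "n < j" by simp
        have "kc (Suc n) = kc n" using nulS[OF before[OF step.hyps(1) nj]] .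
        then show "kc (Suc n) = kc i" using step.IH nj by simp
      qed
    qed
    show ?thesis using j kcm[of j] unfolding P_def by blast
  qed
  have kcall: "\<exists>i. kc i = k" for k
  proof (induction k)
    case 0 then show ?case using kc0 by blast
  next
    case (Suc k)
    then obtain i where i: "kc i = k" by blast
    obtain j where "kc j = kc i" "\<not> (f (x j) - \<gamma> j > \<epsilon> (kc j))" using firstser[of i] by blast
    then have "kc (Suc j) = Suc k" using serS[of j] i by simp
    then show ?case by blast
  qed
  have B: "\<exists>i. kc i = k \<and> \<not> (f (x i) - \<gamma> i > \<epsilon> k)" for k
  proof -
    obtain i where i: "kc i = k" using kcall by blast
    obtain j where "kc j = kc i" "\<not> (f (x j) - \<gamma> j > \<epsilon> (kc j))" using firstser[of i] by blast
    then show ?thesis using i by auto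
  qed
  have C: "\<forall>k. f xs - \<epsilon> k \<le> \<sigma> k \<and> \<sigma> k \<le> f xs \<and> f xs \<le> f (z k) \<and> f (z k) \<le> f xs + \<epsilon> k"
  proof
    fix k
    obtain i where i: "kc i = k" "\<not> (f (x i) - \<gamma> i > \<epsilon> k)" using B by blast
    have zs: "z k = x i" "\<sigma> k = \<gamma> i" using serS[of i] i by auto
    have "f xs \<le> f (x i)" using xs_opt xD by blast
    then show "f xs - \<epsilon> k \<le> \<sigma> k \<and> \<sigma> k \<le> f xs \<and> f xs \<le> f (z k) \<and> f (z k) \<le> f xs + \<epsilon> k"
      using zs gle[of i] i(2) by auto
  qed
  have l1: "(\<lambda>k. f xs - \<epsilon> k) \<longlonglongrightarrow> f xs" using tendsto_diff[OF tendsto_const eps(2)] by simp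
  have l2: "(\<lambda>k. f xs + \<epsilon> k) \<longlonglongrightarrow> f xs" using tendsto_add[OF tendsto_const eps(2)] by simp
  have "(\<lambda>k. f (z k)) \<longlonglongrightarrow> f xs"
    by (rule tendsto_sandwich[OF _ _ tendsto_const l2]) (use C in auto)
  moreover have "\<sigma> \<longlonglongrightarrow> f xs"
    by (rule tendsto_sandwich[OF _ _ l1 tendsto_const]) (use C in auto)
  ultimately show ?thesis using B by blast
qed

end
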